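(* Let $\theta_1,\theta_2\in\mathbb{R}$ satisfy $\sin(\theta_1)=0$ and $\sin(\theta_2)=0$. Then the two-player two-strategy game with payoffs \[ G_1=\begin{bmatrix}\frac{1}{\sqrt2}\sin(\theta_1+\frac{\pi}{4})&\frac{1}{\sqrt2}\cos(\theta_1+\frac{\pi}{4})\\ -\frac{1}{\sqrt2}\sin(\theta_1+\frac{\pi}{4})&-\frac{1}{\sqrt2}\cos(\theta_1+\frac{\pi}{4})\end{bmatrix},\qquad G_2=\begin{bmatrix}\frac{1}{\sqrt2}\sin(\theta_2+\frac{\pi}{4})&-\frac{1}{\sqrt2}\sin(\theta_2+\frac{\pi}{4})\\ \frac{1}{\sqrt2}\cos(\theta_2+\frac{\pi}{4})&-\frac{1}{\sqrt2}\cos(\theta_2+\frac{\pi}{4})\end{bmatrix} \] (rows indexed by player 1's strategy, columns by player 2's strategy) is both invariant-zero-sum and invariant-common-payoff.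
   Context: A two-player game $(G_1,G_2)$ is invariant-zero-sum (resp. invariant-common-payoff) if there exist scalars $s_1,s_2>0$ and functions $b_1$ (of player 2's strategy $a_2$) and $b_2$ (of player 1's strategy $a_1$) such that $\hat G_p(a)=s_pG_p(a)+b_p(a_{-p})$ satisfy $\hat G_1(a)+\hat G_2(a)=0$ (resp. $\hat G_1(a)=\hat G_2(a)$) for all joint strategies $a=(a_1,a_2)$. *)

theory Defs
  imports "HOL-Analysis.Analysis"
begin

definition invariant_zero_sum :: "('a \<Rightarrow> 'b \<Rightarrow> real) \<Rightarrow> ('a \<Rightarrow> 'b \<Rightarrow> real) \<Rightarrow> bool" where
  "invariant_zero_sum G1 G2 \<longleftrightarrow>
     (\<exists>s1 s2 :: real. \<exists>b1 :: 'b \<Rightarrow> real. \<exists>b2 :: 'a \<Rightarrow> real. s1 > 0 \<and> s2 > 0 \<and>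
        (\<forall>a1 a2. (s1 * G1 a1 a2 + b1 a2) + (s2 * G2 a1 a2 + b2 a1) = 0))"

definition invariant_common_payoff :: "('a \<Rightarrow> 'b \<Rightarrow> real) \<Rightarrow> ('a \<Rightarrow> 'b \<Rightarrow> real) \<Rightarrow> bool" where
  "invariant_common_payoff G1 G2 \<longleftrightarrow>
     (\<exists>s1 s2 :: real. \<exists>b1 :: 'b \<Rightarrow> real. \<exists>b2 :: 'a \<Rightarrow> real. s1 > 0 \<and> s2 > 0 \<and>
        (\<forall>a1 a2. s1 * G1 a1 a2 + b1 a2 = s2 * G2 a1 a2 + b2 a1))"

(* Build a 2x2 payoff matrix; strategies indexed by {0,1} via nat-free type bool:
   False = first strategy (row/column 1), True = second. *)
definition mat2 :: "real \<Rightarrow> real \<Rightarrow> real \<Rightarrow> real \<Rightarrow> bool \<Rightarrow> bool \<Rightarrow> real" where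
  "mat2 m11 m12 m21 m22 = (\<lambda>i j. if \<not> i then (if \<not> j then m11 else m12)
                                        else (if \<not> j then m21 else m22))"

end

theory Submission
  imports Defs
begin

lemma sc_eq: fixes t :: real assumes "sin t = 0" shows "sin (t + pi/4) = cos (t + pi/4)"
  using assms by (simp add: sin_add cos_add sin_45 cos_45)

theorem mainTheorem5:
  fixes \<theta>1 \<theta>2 :: real
  assumes "sin \<theta>1 = 0" and "sin \<theta>2 = 0"
  defines "G1 \<equiv> mat2 (1 / sqrt 2 * sin (\<theta>1 + pi / 4)) (1 / sqrt 2 * cos (\<theta>1 + pi / 4))
                      (- (1 / sqrt 2) * sin (\<theta>1 + pi / 4)) (- (1 / sqrt 2) * cos (\<theta>1 + pi / 4))"
      and "G2 \<equiv> mat2 (1 / sqrt 2 * sin (\<theta>2 + pi / 4)) (- (1 / sqrt 2) * sin (\<theta>2 + pi / 4))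
                      (1 / sqrt 2 * cos (\<theta>2 + pi / 4)) (- (1 / sqrt 2) * cos (\<theta>2 + pi / 4))"
  shows "invariant_zero_sum G1 G2 \<and> invariant_common_payoff G1 G2"
proof -
  have e1: "sin (\<theta>1 + pi/4) = cos (\<theta>1 + pi/4)" using sc_eq assms(1) .
  have e2: "sin (\<theta>2 + pi/4) = cos (\<theta>2 + pi/4)" using sc_eq assms(2) .
  define H where "H = (\<lambda>a1 a2. G1 a1 a2 + G2 a1 a2)"
  define K where "K = (\<lambda>a1 a2. G1 a1 a2 - G2 a1 a2)"
  have hz: "\<forall>a1 a2. (1 * G1 a1 a2 + (- H False a2 + H False False)) + (1 * G2 a1 a2 + (- H a1 False)) = 0"
  proof (intro allI)
    fix a1 a2 show "(1 * G1 a1 a2 + (- H False a2 + H False False)) + (1 * G2 a1 a2 + (- H a1 False)) = 0"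
      unfolding H_def G1_def G2_def mat2_def using e1 e2 by (cases a1; cases a2) auto
  qed
  have kz: "\<forall>a1 a2. 1 * G1 a1 a2 + (- K False a2 + K False False) = 1 * G2 a1 a2 + K a1 False"
  proof (intro allI)
    fix a1 a2 show "1 * G1 a1 a2 + (- K False a2 + K False False) = 1 * G2 a1 a2 + K a1 False"
      unfolding K_def G1_def G2_def mat2_def using e1 e2 by (cases a1; cases a2) auto
  qed
  show ?thesis unfolding invariant_zero_sum_def invariant_common_payoff_def
  proof (intro conjI)
    show "\<exists>s1 s2 :: real. \<exists>b1 b2. s1 > 0 \<and> s2 > 0 \<and>
        (\<forall>a1 a2. (s1 * G1 a1 a2 + b1 a2) + (s2 * G2 a1 a2 + b2 a1) = 0)"
      using hz by (intro exI[of _ 1] exI[of _ "\<lambda>a2. - H False a2 + H False False"] exI[of _ "\<lambda>a1. - H a1 False"]) simp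
    show "\<exists>s1 s2 :: real. \<exists>b1 b2. s1 > 0 \<and> s2 > 0 \<and>
        (\<forall>a1 a2. s1 * G1 a1 a2 + b1 a2 = s2 * G2 a1 a2 + b2 a1)"
      using kz by (intro exI[of _ 1] exI[of _ "\<lambda>a2. - K False a2 + K False False"] exI[of _ "\<lambda>a1. K a1 False"]) simp
  qed
qed

end
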